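(* Let $\alpha_1,\dots,\alpha_6\in\mathbb{C}$ with $2\alpha_1+\alpha_2+\dots+\alpha_6=1$. The rational symplectic transformation $$S_1:(q_1,p_1,q_2,p_2,t,s)\mapsto(X,Y,Z,W,T,S)=\Big(q_1,\,p_1+\frac{q_2p_2-\alpha_1-\alpha_3}{q_1},\,\frac{q_2}{q_1},\,p_2q_1,\,t,\,\frac{s}{t}\Big)$$ transforms the Hamiltonian system with Hamiltonians $H'_1,H'_2$ into the Hamiltonian system (in variables $(X,Y,Z,W)$, times $(T,S)$) with Hamiltonians $H''_1,H''_2$, where $H''_1=H_{VI}(q_1,p_1,t;\alpha_1+\alpha_4+\alpha_6,\alpha_1+\alpha_2,\alpha_3,\alpha_1+\alpha_5,-\alpha_1-\alpha_3)-\frac{\alpha_4}{t(ts-1)}q_1p_1+\frac{\alpha_3(s-1)}{(t-1)(ts-1)}q_2p_2+\frac{s}{ts-1}p_1p_2-\frac{1}{t-1}p_1q_2p_2+\frac{2(s-1)}{(t-1)(ts-1)}q_1p_1q_2p_2-\frac{q_1q_2(q_1p_1+\alpha_3)\{(ts-1)p_2-(t-1)(q_2p_2+\alpha_4)\}}{t(t-1)(ts-1)}$ and $H''_2=\pi(H''_1)$, with $\pi$ the substitution $(q_1,p_1,q_2,p_2,t,s;\alpha_1,\dots,\alpha_6)\mapsto(q_2,p_2,q_1,p_1,s,t;-\alpha_1-\alpha_2-\alpha_3-\alpha_4,\alpha_2,\alpha_4,\alpha_3,1-\alpha_6,1-\alpha_5)$ (the variables of $H''_i$ being renamed $(X,Y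,Z,W,T,S)\to(q_1,p_1,q_2,p_2,t,s)$).
   Context: $H_{VI}(q,p,t;a_0,a_1,a_2,a_3,a_4)=\frac{1}{t(t-1)}\big[p^2(q-t)(q-1)q-\{(a_0-1)(q-1)q+a_3(q-t)q+a_4(q-t)(q-1)\}p+a_2(a_1+a_2)(q-t)\big]$. A Hamiltonian system with Hamiltonians $K_1,K_2$ means $dq_j=\frac{\partial K_1}{\partial p_j}dt+\frac{\partial K_2}{\partial p_j}ds$, $dp_j=-\frac{\partial K_1}{\partial q_j}dt-\frac{\partial K_2}{\partial q_j}ds$ ($j=1,2$). $H'_1=H_{VI}(q_1,p_1,t;\alpha_1+\alpha_4+\alpha_6,-\alpha_1-\alpha_2,\alpha_2,\alpha_1+\alpha_5,\alpha_1+\alpha_3)+\alpha_2\Big\{\frac{(s-1)q_2}{(t-1)(t-s)}-\frac{sq_1}{t(t-s)}+\frac{q_1q_2}{t(t-1)}\Big\}p_2+\alpha_4\frac{(q_1-q_2)p_1}{t-s}+\Big\{\frac{2(s-1)q_1q_2}{(t-1)(t-s)}-\frac{tq_2^2+sq_1^2}{t(t-s)}+\frac{(q_1^2+t)q_2}{t(t-1)}\Big\}p_1p_2$, and $H'_2$ obtained from $H'_1$ by $q_1\leftrightarrow q_2$, $p_1\leftrightarrow p_2$, $t\leftrightarrow s$, $\alpha_2\leftrightarrow\alpha_4$. *)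

theory Defs
  imports "HOL-Analysis.Analysis"
begin

definition HVI :: "complex \<Rightarrow> complex \<Rightarrow> complex \<Rightarrow> complex \<Rightarrow> complex \<Rightarrow> complex \<Rightarrow> complex \<Rightarrow> complex \<Rightarrow> complex" where
  "HVI q p t a0 a1 a2 a3 a4 =
     (p^2 * (q - t) * (q - 1) * q
      - ((a0 - 1) * (q - 1) * q + a3 * (q - t) * q + a4 * (q - t) * (q - 1)) * p
      + a2 * (a1 + a2) * (q - t)) / (t * (t - 1))"

text \<open>Hamiltonians are functions of (q1,p1,q2,p2,t,s).\<close>
type_synonym ham = "complex \<Rightarrow> complex \<Rightarrow> complex \<Rightarrow> complex \<Rightarrow> complex \<Rightarrow> complex \<Rightarrow> complex"

definition dq1 :: "ham \<Rightarrow> complex \<Rightarrow> complex \<Rightarrow> complex \<Rightarrow> complex \<Rightarrow> complex \<Rightarrow> complex \<Rightarrow> complex" where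
  "dq1 K a b c e t s = deriv (\<lambda>x. K x b c e t s) a"
definition dp1 :: "ham \<Rightarrow> complex \<Rightarrow> complex \<Rightarrow> complex \<Rightarrow> complex \<Rightarrow> complex \<Rightarrow> complex \<Rightarrow> complex" where
  "dp1 K a b c e t s = deriv (\<lambda>x. K a x c e t s) b"
definition dq2 :: "ham \<Rightarrow> complex \<Rightarrow> complex \<Rightarrow> complex \<Rightarrow> complex \<Rightarrow> complex \<Rightarrow> complex \<Rightarrow> complex" where
  "dq2 K a b c e t s = deriv (\<lambda>x. K a b x e t s) c"
definition dp2 :: "ham \<Rightarrow> complex \<Rightarrow> complex \<Rightarrow> complex \<Rightarrow> complex \<Rightarrow> complex \<Rightarrow> complex \<Rightarrow> complex" where
  "dp2 K a b c e t s = deriv (\<lambda>x. K a b c x t s) e"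

definition ham_sol :: "ham \<Rightarrow> ham \<Rightarrow> (complex \<times> complex) set \<Rightarrow>
    (complex \<times> complex \<Rightarrow> complex) \<Rightarrow> (complex \<times> complex \<Rightarrow> complex) \<Rightarrow>
    (complex \<times> complex \<Rightarrow> complex) \<Rightarrow> (complex \<times> complex \<Rightarrow> complex) \<Rightarrow> bool" where
  "ham_sol K1 K2 U Q1 P1 Q2 P2 \<longleftrightarrow> open U \<and>
    (\<forall>z\<in>U. Q1 differentiable (at z) \<and> P1 differentiable (at z) \<and>
            Q2 differentiable (at z) \<and> P2 differentiable (at z)) \<and>
    (\<forall>t s. (t, s) \<in> U \<longrightarrow>
      (let a = Q1 (t, s); b = P1 (t, s); c = Q2 (t, s); e = P2 (t, s) in
        ((\<lambda>x. Q1 (x, s)) has_field_derivative dp1 K1 a b c e t s) (at t) \<and>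
        ((\<lambda>x. Q1 (t, x)) has_field_derivative dp1 K2 a b c e t s) (at s) \<and>
        ((\<lambda>x. P1 (x, s)) has_field_derivative - dq1 K1 a b c e t s) (at t) \<and>
        ((\<lambda>x. P1 (t, x)) has_field_derivative - dq1 K2 a b c e t s) (at s) \<and>
        ((\<lambda>x. Q2 (x, s)) has_field_derivative dp2 K1 a b c e t s) (at t) \<and>
        ((\<lambda>x. Q2 (t, x)) has_field_derivative dp2 K2 a b c e t s) (at s) \<and>
        ((\<lambda>x. P2 (x, s)) has_field_derivative - dq2 K1 a b c e t s) (at t) \<and>
        ((\<lambda>x. P2 (t, x)) has_field_derivative - dq2 K2 a b c e t s) (at s)))"

definition H1' :: "complex \<Rightarrow> complex \<Rightarrow> complex \<Rightarrow> complex \<Rightarrow> complex \<Rightarrow> complex \<Rightarrow> ham" where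
  "H1' a1 a2 a3 a4 a5 a6 q1 p1 q2 p2 t s =
     HVI q1 p1 t (a1 + a4 + a6) (- a1 - a2) a2 (a1 + a5) (a1 + a3)
     + a2 * ((s - 1) * q2 / ((t - 1) * (t - s)) - s * q1 / (t * (t - s)) + q1 * q2 / (t * (t - 1))) * p2
     + a4 * (q1 - q2) * p1 / (t - s)
     + (2 * (s - 1) * q1 * q2 / ((t - 1) * (t - s)) - (t * q2^2 + s * q1^2) / (t * (t - s))
        + (q1^2 + t) * q2 / (t * (t - 1))) * p1 * p2"

definition H2' :: "complex \<Rightarrow> complex \<Rightarrow> complex \<Rightarrow> complex \<Rightarrow> complex \<Rightarrow> complex \<Rightarrow> ham" where
  "H2' a1 a2 a3 a4 a5 a6 q1 p1 q2 p2 t s = H1' a1 a4 a3 a2 a5 a6 q2 p2 q1 p1 s t"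

definition H1'' :: "complex \<Rightarrow> complex \<Rightarrow> complex \<Rightarrow> complex \<Rightarrow> complex \<Rightarrow> complex \<Rightarrow> ham" where
  "H1'' a1 a2 a3 a4 a5 a6 q1 p1 q2 p2 t s =
     HVI q1 p1 t (a1 + a4 + a6) (a1 + a2) a3 (a1 + a5) (- a1 - a3)
     - a4 / (t * (t * s - 1)) * q1 * p1
     + a3 * (s - 1) / ((t - 1) * (t * s - 1)) * q2 * p2
     + s / (t * s - 1) * p1 * p2
     - 1 / (t - 1) * p1 * q2 * p2
     + 2 * (s - 1) / ((t - 1) * (t * s - 1)) * q1 * p1 * q2 * p2
     - q1 * q2 * (q1 * p1 + a3) * ((t * s - 1) * p2 - (t - 1) * (q2 * p2 + a4))
        / (t * (t - 1) * (t * s - 1))"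

definition H2'' :: "complex \<Rightarrow> complex \<Rightarrow> complex \<Rightarrow> complex \<Rightarrow> complex \<Rightarrow> complex \<Rightarrow> ham" where
  "H2'' a1 a2 a3 a4 a5 a6 q1 p1 q2 p2 t s =
     H1'' (- a1 - a2 - a3 - a4) a2 a4 a3 (1 - a6) (1 - a5) q2 p2 q1 p1 s t"

end

theory Submission
  imports Defs
begin


definition HVIq :: "complex \<Rightarrow> complex \<Rightarrow> complex \<Rightarrow> complex \<Rightarrow> complex \<Rightarrow> complex \<Rightarrow> complex \<Rightarrow> complex \<Rightarrow> complex" where
 "HVIq q p t A0 A1 A2 A3 A4 = (p^2*(3*q^2-2*(1+t)*q+t)-((A0-1)*(2*q-1)+A3*(2*q-t)+A4*(2*q-t-1))*p+A2*(A1+A2))/(t*(t-1))"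
definition HVIp :: "complex \<Rightarrow> complex \<Rightarrow> complex \<Rightarrow> complex \<Rightarrow> complex \<Rightarrow> complex \<Rightarrow> complex \<Rightarrow> complex \<Rightarrow> complex" where
 "HVIp q p t A0 A1 A2 A3 A4 = (2*p*q*(q-1)*(q-t)-((A0-1)*(q-1)*q+A3*(q-t)*q+A4*(q-t)*(q-1)))/(t*(t-1))"
definition MM :: "complex \<Rightarrow> complex \<Rightarrow> complex \<Rightarrow> complex \<Rightarrow> complex" where
 "MM q1 q2 t s = 2*(s-1)*q1*q2/((t-1)*(t-s))-(t*q2^2+s*q1^2)/(t*(t-s))+(q1^2+t)*q2/(t*(t-1))"

definition H1q1 :: "complex \<Rightarrow> complex \<Rightarrow> complex \<Rightarrow> complex \<Rightarrow> complex \<Rightarrow> complex \<Rightarrow> ham" where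
 "H1q1 a1 a2 a3 a4 a5 a6 q1 p1 q2 p2 t s = HVIq q1 p1 t (a1+a4+a6) (-a1-a2) a2 (a1+a5) (a1+a3)+a2*(-s/(t*(t-s))+q2/(t*(t-1)))*p2+a4*p1/(t-s)+(2*(s-1)*q2/((t-1)*(t-s))-2* s*q1/(t*(t-s))+2*q1*q2/(t*(t-1)))*p1*p2"
definition H1p1 :: "complex \<Rightarrow> complex \<Rightarrow> complex \<Rightarrow> complex \<Rightarrow> complex \<Rightarrow> complex \<Rightarrow> ham" where
 "H1p1 a1 a2 a3 a4 a5 a6 q1 p1 q2 p2 t s = HVIp q1 p1 t (a1+a4+a6) (-a1-a2) a2 (a1+a5) (a1+a3)+a4*(q1-q2)/(t-s)+MM q1 q2 t s*p2"
definition H1q2 :: "complex \<Rightarrow> complex \<Rightarrow> complex \<Rightarrow> complex \<Rightarrow> complex \<Rightarrow> complex \<Rightarrow> ham" where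
 "H1q2 a1 a2 a3 a4 a5 a6 q1 p1 q2 p2 t s = a2*((s-1)/((t-1)*(t-s))+q1/(t*(t-1)))*p2-a4*p1/(t-s)+(2*(s-1)*q1/((t-1)*(t-s))-2*t*q2/(t*(t-s))+(q1^2+t)/(t*(t-1)))*p1*p2"
definition H1p2 :: "complex \<Rightarrow> complex \<Rightarrow> complex \<Rightarrow> complex \<Rightarrow> complex \<Rightarrow> complex \<Rightarrow> ham" where
 "H1p2 a1 a2 a3 a4 a5 a6 q1 p1 q2 p2 t s = a2*((s-1)*q2/((t-1)*(t-s))-s*q1/(t*(t-s))+q1*q2/(t*(t-1)))+MM q1 q2 t s*p1"

definition K1q1 :: "complex \<Rightarrow> complex \<Rightarrow> complex \<Rightarrow> complex \<Rightarrow> complex \<Rightarrow> complex \<Rightarrow> ham" where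
 "K1q1 a1 a2 a3 a4 a5 a6 q1 p1 q2 p2 t s = HVIq q1 p1 t (a1+a4+a6) (a1+a2) a3 (a1+a5) (-a1-a3)-a4/(t*(t* s-1))*p1+2*(s-1)/((t-1)*(t* s-1))*p1*q2*p2-q2*(2*q1*p1+a3)*((t* s-1)*p2-(t-1)*(q2*p2+a4))/(t*(t-1)*(t* s-1))"
definition K1p1 :: "complex \<Rightarrow> complex \<Rightarrow> complex \<Rightarrow> complex \<Rightarrow> complex \<Rightarrow> complex \<Rightarrow> ham" where
 "K1p1 a1 a2 a3 a4 a5 a6 q1 p1 q2 p2 t s = HVIp q1 p1 t (a1+a4+a6) (a1+a2) a3 (a1+a5) (-a1-a3)-a4/(t*(t* s-1))*q1+s/(t* s-1)*p2-1/(t-1)*q2*p2+2*(s-1)/((t-1)*(t* s-1))*q1*q2*p2-q1^2*q2*((t* s-1)*p2-(t-1)*(q2*p2+a4))/(t*(t-1)*(t* s-1))"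
definition K1q2 :: "complex \<Rightarrow> complex \<Rightarrow> complex \<Rightarrow> complex \<Rightarrow> complex \<Rightarrow> complex \<Rightarrow> ham" where
 "K1q2 a1 a2 a3 a4 a5 a6 q1 p1 q2 p2 t s = a3*(s-1)/((t-1)*(t* s-1))*p2-1/(t-1)*p1*p2+2*(s-1)/((t-1)*(t* s-1))*q1*p1*p2-q1*(q1*p1+a3)*(((t* s-1)*p2-(t-1)*(q2*p2+a4))-(t-1)*q2*p2)/(t*(t-1)*(t* s-1))"
definition K1p2 :: "complex \<Rightarrow> complex \<Rightarrow> complex \<Rightarrow> complex \<Rightarrow> complex \<Rightarrow> complex \<Rightarrow> ham" where
 "K1p2 a1 a2 a3 a4 a5 a6 q1 p1 q2 p2 t s = a3*(s-1)/((t-1)*(t* s-1))*q2+s/(t* s-1)*p1-1/(t-1)*p1*q2+2*(s-1)/((t-1)*(t* s-1))*q1*p1*q2-q1*q2*(q1*p1+a3)*((t* s-1)-(t-1)*q2)/(t*(t-1)*(t* s-1))"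

lemma dq1_H1': "dq1 (H1' a1 a2 a3 a4 a5 a6) a b c e t s = H1q1 a1 a2 a3 a4 a5 a6 a b c e t s"
  unfolding dq1_def H1'_def HVI_def H1q1_def HVIq_def HVIp_def MM_def divide_inverse
  apply (rule DERIV_imp_deriv)
  apply (rule derivative_eq_intros refl)+
  apply (simp only: power2_eq_square)?
  apply (simp add: algebra_simps)
  done

lemma dp1_H1': "dp1 (H1' a1 a2 a3 a4 a5 a6) a b c e t s = H1p1 a1 a2 a3 a4 a5 a6 a b c e t s"
  unfolding dp1_def H1'_def HVI_def H1p1_def HVIq_def HVIp_def MM_def divide_inverse
  apply (rule DERIV_imp_deriv)
  apply (rule derivative_eq_intros refl)+
  apply (simp only: power2_eq_square)?
  apply (simp add: algebra_simps)
  done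

lemma dq2_H1': "dq2 (H1' a1 a2 a3 a4 a5 a6) a b c e t s = H1q2 a1 a2 a3 a4 a5 a6 a b c e t s"
  unfolding dq2_def H1'_def HVI_def H1q2_def HVIq_def HVIp_def MM_def divide_inverse
  apply (rule DERIV_imp_deriv)
  apply (rule derivative_eq_intros refl)+
  apply (simp only: power2_eq_square)?
  apply (simp add: algebra_simps)
  done

lemma dp2_H1': "dp2 (H1' a1 a2 a3 a4 a5 a6) a b c e t s = H1p2 a1 a2 a3 a4 a5 a6 a b c e t s"
  unfolding dp2_def H1'_def HVI_def H1p2_def HVIq_def HVIp_def MM_def divide_inverse
  apply (rule DERIV_imp_deriv)
  apply (rule derivative_eq_intros refl)+
  apply (simp only: power2_eq_square)?
  apply (simp add: algebra_simps)
  done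

lemma dq1_H1'': "dq1 (H1'' a1 a2 a3 a4 a5 a6) a b c e t s = K1q1 a1 a2 a3 a4 a5 a6 a b c e t s"
  unfolding dq1_def H1''_def HVI_def K1q1_def HVIq_def HVIp_def MM_def divide_inverse
  apply (rule DERIV_imp_deriv)
  apply (rule derivative_eq_intros refl)+
  apply (simp only: power2_eq_square)?
  apply (simp add: algebra_simps)
  done

lemma dp1_H1'': "dp1 (H1'' a1 a2 a3 a4 a5 a6) a b c e t s = K1p1 a1 a2 a3 a4 a5 a6 a b c e t s"
  unfolding dp1_def H1''_def HVI_def K1p1_def HVIq_def HVIp_def MM_def divide_inverse
  apply (rule DERIV_imp_deriv)
  apply (rule derivative_eq_intros refl)+
  apply (simp only: power2_eq_square)?
  apply (simp add: algebra_simps)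
  done

lemma dq2_H1'': "dq2 (H1'' a1 a2 a3 a4 a5 a6) a b c e t s = K1q2 a1 a2 a3 a4 a5 a6 a b c e t s"
  unfolding dq2_def H1''_def HVI_def K1q2_def HVIq_def HVIp_def MM_def divide_inverse
  apply (rule DERIV_imp_deriv)
  apply (rule derivative_eq_intros refl)+
  apply (simp only: power2_eq_square)?
  apply (simp add: algebra_simps)
  done

lemma dp2_H1'': "dp2 (H1'' a1 a2 a3 a4 a5 a6) a b c e t s = K1p2 a1 a2 a3 a4 a5 a6 a b c e t s"
  unfolding dp2_def H1''_def HVI_def K1p2_def HVIq_def HVIp_def MM_def divide_inverse
  apply (rule DERIV_imp_deriv)
  apply (rule derivative_eq_intros refl)+
  apply (simp only: power2_eq_square)?
  apply (simp add: algebra_simps)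
  done

lemma dH2':
 "dq1 (H2' a1 a2 a3 a4 a5 a6) a b c e t s = H1q2 a1 a4 a3 a2 a5 a6 c e a b s t"
 "dp1 (H2' a1 a2 a3 a4 a5 a6) a b c e t s = H1p2 a1 a4 a3 a2 a5 a6 c e a b s t"
 "dq2 (H2' a1 a2 a3 a4 a5 a6) a b c e t s = H1q1 a1 a4 a3 a2 a5 a6 c e a b s t"
 "dp2 (H2' a1 a2 a3 a4 a5 a6) a b c e t s = H1p1 a1 a4 a3 a2 a5 a6 c e a b s t"
  by (simp_all add: H2'_def dq1_def dp1_def dq2_def dp2_def flip: dq1_H1' dp1_H1' dq2_H1' dp2_H1')

lemma dH2'':
 "dq1 (H2'' a1 a2 a3 a4 a5 a6) a b c e t s = K1q2 (- a1 - a2 - a3 - a4) a2 a4 a3 (1 - a6) (1 - a5) c e a b s t"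
 "dp1 (H2'' a1 a2 a3 a4 a5 a6) a b c e t s = K1p2 (- a1 - a2 - a3 - a4) a2 a4 a3 (1 - a6) (1 - a5) c e a b s t"
 "dq2 (H2'' a1 a2 a3 a4 a5 a6) a b c e t s = K1q1 (- a1 - a2 - a3 - a4) a2 a4 a3 (1 - a6) (1 - a5) c e a b s t"
 "dp2 (H2'' a1 a2 a3 a4 a5 a6) a b c e t s = K1p1 (- a1 - a2 - a3 - a4) a2 a4 a3 (1 - a6) (1 - a5) c e a b s t"
  by (simp_all add: H2''_def dq1_def dp1_def dq2_def dp2_def flip: dq1_H1'' dp1_H1'' dq2_H1'' dp2_H1'')




lemma nzs:
  fixes T S :: complex
  assumes "T \<noteq> 0" "T \<noteq> 1" "S \<noteq> 0" "S \<noteq> 1" "T*S \<noteq> 1"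
  shows "T - 1 \<noteq> 0" "T*S - 1 \<noteq> 0" "T - T*S \<noteq> 0" "T*S - T \<noteq> 0" "S*T - 1 \<noteq> 0" "S - 1 \<noteq> 0" "T*S \<noteq> 0" "S*T \<noteq> 0"
proof -
  have e1: "T - T*S = T*(1-S)" by (simp add: algebra_simps)
  have e2: "T*S - T = T*(S-1)" by (simp add: algebra_simps)
  show "T - 1 \<noteq> 0" "T*S - 1 \<noteq> 0" "S*T - 1 \<noteq> 0" "S - 1 \<noteq> 0" "T*S \<noteq> 0" "S*T \<noteq> 0"
    using assms by (simp_all add: mult.commute)
  show "T - T*S \<noteq> 0" "T*S - T \<noteq> 0" unfolding e1 e2 using assms by auto
qed

lemma alg1:
  fixes a b c e T S a1 a2 a3 a4 a5 a6 :: complex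
  assumes sum: "a6 = 1 - 2*a1 - a2 - a3 - a4 - a5"
    and nz: "T \<noteq> 0" "T \<noteq> 1" "S \<noteq> 0" "S \<noteq> 1" "T*S \<noteq> 1" "a \<noteq> 0"
  shows "(1 * H1p1 a1 a2 a3 a4 a5 a6 a b c e T (T*S) + S * H1p2 a1 a4 a3 a2 a5 a6 c e a b (T*S) T) = K1p1 a1 a2 a3 a4 a5 a6 a (b + (c*e - a1 - a3)/a) (c/a) (e*a) T S"
  unfolding sum H1p1_def H1p2_def H1q1_def H1q2_def K1p1_def K1p2_def K1q1_def K1q2_def HVIp_def HVIq_def MM_def
  using nz nzs[OF nz(1-5)] by (simp add: divide_simps) algebra

lemma alg2:
  fixes a b c e T S a1 a2 a3 a4 a5 a6 :: complex
  assumes sum: "a6 = 1 - 2*a1 - a2 - a3 - a4 - a5"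
    and nz: "T \<noteq> 0" "T \<noteq> 1" "S \<noteq> 0" "S \<noteq> 1" "T*S \<noteq> 1" "a \<noteq> 0"
  shows "(1 * (- H1q1 a1 a2 a3 a4 a5 a6 a b c e T (T*S)) + S * (- H1q2 a1 a4 a3 a2 a5 a6 c e a b (T*S) T)) + (((1 * H1p2 a1 a2 a3 a4 a5 a6 a b c e T (T*S) + S * H1p1 a1 a4 a3 a2 a5 a6 c e a b (T*S) T)*e + c*(1 * (- H1q2 a1 a2 a3 a4 a5 a6 a b c e T (T*S)) + S * (- H1q1 a1 a4 a3 a2 a5 a6 c e a b (T*S) T)))*a - (c*e - a1 - a3)*(1 * H1p1 a1 a2 a3 a4 a5 a6 a b c e T (T*S) + S * H1p2 a1 a4 a3 a2 a5 a6 c e a b (T*S) T))/(a*a) = - K1q1 a1 a2 a3 a4 a5 a6 a (b + (c*e - a1 - a3)/a) (c/a) (e*a) T S"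
  unfolding sum H1p1_def H1p2_def H1q1_def H1q2_def K1p1_def K1p2_def K1q1_def K1q2_def HVIp_def HVIq_def MM_def
  using nz nzs[OF nz(1-5)] by (simp add: divide_simps) algebra

lemma alg3:
  fixes a b c e T S a1 a2 a3 a4 a5 a6 :: complex
  assumes sum: "a6 = 1 - 2*a1 - a2 - a3 - a4 - a5"
    and nz: "T \<noteq> 0" "T \<noteq> 1" "S \<noteq> 0" "S \<noteq> 1" "T*S \<noteq> 1" "a \<noteq> 0"
  shows "((1 * H1p2 a1 a2 a3 a4 a5 a6 a b c e T (T*S) + S * H1p1 a1 a4 a3 a2 a5 a6 c e a b (T*S) T)*a - c*(1 * H1p1 a1 a2 a3 a4 a5 a6 a b c e T (T*S) + S * H1p2 a1 a4 a3 a2 a5 a6 c e a b (T*S) T))/(a*a) = K1p2 a1 a2 a3 a4 a5 a6 a (b + (c*e - a1 - a3)/a) (c/a) (e*a) T S"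
  unfolding sum H1p1_def H1p2_def H1q1_def H1q2_def K1p1_def K1p2_def K1q1_def K1q2_def HVIp_def HVIq_def MM_def
  using nz nzs[OF nz(1-5)] by (simp add: divide_simps) algebra

lemma alg4:
  fixes a b c e T S a1 a2 a3 a4 a5 a6 :: complex
  assumes sum: "a6 = 1 - 2*a1 - a2 - a3 - a4 - a5"
    and nz: "T \<noteq> 0" "T \<noteq> 1" "S \<noteq> 0" "S \<noteq> 1" "T*S \<noteq> 1" "a \<noteq> 0"
  shows "(1 * (- H1q2 a1 a2 a3 a4 a5 a6 a b c e T (T*S)) + S * (- H1q1 a1 a4 a3 a2 a5 a6 c e a b (T*S) T))*a + e*(1 * H1p1 a1 a2 a3 a4 a5 a6 a b c e T (T*S) + S * H1p2 a1 a4 a3 a2 a5 a6 c e a b (T*S) T) = - K1q2 a1 a2 a3 a4 a5 a6 a (b + (c*e - a1 - a3)/a) (c/a) (e*a) T S"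
  unfolding sum H1p1_def H1p2_def H1q1_def H1q2_def K1p1_def K1p2_def K1q1_def K1q2_def HVIp_def HVIq_def MM_def
  using nz nzs[OF nz(1-5)] by (simp add: divide_simps) algebra

lemma alg5:
  fixes a b c e T S a1 a2 a3 a4 a5 a6 :: complex
  assumes sum: "a6 = 1 - 2*a1 - a2 - a3 - a4 - a5"
    and nz: "T \<noteq> 0" "T \<noteq> 1" "S \<noteq> 0" "S \<noteq> 1" "T*S \<noteq> 1" "a \<noteq> 0"
  shows "(0 * H1p1 a1 a2 a3 a4 a5 a6 a b c e T (T*S) + T * H1p2 a1 a4 a3 a2 a5 a6 c e a b (T*S) T) = K1p2 (- a1 - a2 - a3 - a4) a2 a4 a3 (1 - a6) (1 - a5) (c/a) (e*a) a (b + (c*e - a1 - a3)/a) S T"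
  unfolding sum H1p1_def H1p2_def H1q1_def H1q2_def K1p1_def K1p2_def K1q1_def K1q2_def HVIp_def HVIq_def MM_def
  using nz nzs[OF nz(1-5)] by (simp add: divide_simps) algebra

lemma alg6:
  fixes a b c e T S a1 a2 a3 a4 a5 a6 :: complex
  assumes sum: "a6 = 1 - 2*a1 - a2 - a3 - a4 - a5"
    and nz: "T \<noteq> 0" "T \<noteq> 1" "S \<noteq> 0" "S \<noteq> 1" "T*S \<noteq> 1" "a \<noteq> 0"
  shows "(0 * (- H1q1 a1 a2 a3 a4 a5 a6 a b c e T (T*S)) + T * (- H1q2 a1 a4 a3 a2 a5 a6 c e a b (T*S) T)) + (((0 * H1p2 a1 a2 a3 a4 a5 a6 a b c e T (T*S) + T * H1p1 a1 a4 a3 a2 a5 a6 c e a b (T*S) T)*e + c*(0 * (- H1q2 a1 a2 a3 a4 a5 a6 a b c e T (T*S)) + T * (- H1q1 a1 a4 a3 a2 a5 a6 c e a b (T*S) T)))*a - (c*e - a1 - a3)*(0 * H1p1 a1 a2 a3 a4 a5 a6 a b c e T (T*S) + T * H1p2 a1 a4 a3 a2 a5 a6 c e a b (T*S) T))/(a*a) = - K1q2 (- a1 - a2 - a3 - a4) a2 a4 a3 (1 - a6) (1 - a5) (c/a) (e*a) a (b + (c*e - a1 - a3)/a) S T"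
  unfolding sum H1p1_def H1p2_def H1q1_def H1q2_def K1p1_def K1p2_def K1q1_def K1q2_def HVIp_def HVIq_def MM_def
  using nz nzs[OF nz(1-5)] by (simp add: divide_simps) algebra

lemma alg7:
  fixes a b c e T S a1 a2 a3 a4 a5 a6 :: complex
  assumes sum: "a6 = 1 - 2*a1 - a2 - a3 - a4 - a5"
    and nz: "T \<noteq> 0" "T \<noteq> 1" "S \<noteq> 0" "S \<noteq> 1" "T*S \<noteq> 1" "a \<noteq> 0"
  shows "((0 * H1p2 a1 a2 a3 a4 a5 a6 a b c e T (T*S) + T * H1p1 a1 a4 a3 a2 a5 a6 c e a b (T*S) T)*a - c*(0 * H1p1 a1 a2 a3 a4 a5 a6 a b c e T (T*S) + T * H1p2 a1 a4 a3 a2 a5 a6 c e a b (T*S) T))/(a*a) = K1p1 (- a1 - a2 - a3 - a4) a2 a4 a3 (1 - a6) (1 - a5) (c/a) (e*a) a (b + (c*e - a1 - a3)/a) S T"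
  unfolding sum H1p1_def H1p2_def H1q1_def H1q2_def K1p1_def K1p2_def K1q1_def K1q2_def HVIp_def HVIq_def MM_def
  using nz nzs[OF nz(1-5)] by (simp add: divide_simps) algebra

lemma alg8:
  fixes a b c e T S a1 a2 a3 a4 a5 a6 :: complex
  assumes sum: "a6 = 1 - 2*a1 - a2 - a3 - a4 - a5"
    and nz: "T \<noteq> 0" "T \<noteq> 1" "S \<noteq> 0" "S \<noteq> 1" "T*S \<noteq> 1" "a \<noteq> 0"
  shows "(0 * (- H1q2 a1 a2 a3 a4 a5 a6 a b c e T (T*S)) + T * (- H1q1 a1 a4 a3 a2 a5 a6 c e a b (T*S) T))*a + e*(0 * H1p1 a1 a2 a3 a4 a5 a6 a b c e T (T*S) + T * H1p2 a1 a4 a3 a2 a5 a6 c e a b (T*S) T) = - K1q1 (- a1 - a2 - a3 - a4) a2 a4 a3 (1 - a6) (1 - a5) (c/a) (e*a) a (b + (c*e - a1 - a3)/a) S T"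
  unfolding sum H1p1_def H1p2_def H1q1_def H1q2_def K1p1_def K1p2_def K1q1_def K1q2_def HVIp_def HVIq_def MM_def
  using nz nzs[OF nz(1-5)] by (simp add: divide_simps) algebra




lemma chain_partial:
  fixes f :: "complex \<times> complex \<Rightarrow> complex" and \<gamma> :: "complex \<Rightarrow> complex \<times> complex"
  assumes fd: "f differentiable at (t, s)"
    and hA: "((\<lambda>x. f (x, s)) has_field_derivative A) (at t)"
    and hB: "((\<lambda>x. f (t, x)) has_field_derivative B) (at s)"
    and g: "(\<gamma> has_derivative (\<lambda>h. (u * h, v * h))) (at x)"
    and gx: "\<gamma> x = (t, s)"
  shows "((\<lambda>y. f (\<gamma> y)) has_field_derivative (u * A + v * B)) (at x)"
proof -
  obtain D where D: "(f has_derivative D) (at (t, s))"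
    using fd unfolding differentiable_def by blast
  have lin: "linear D" using has_derivative_linear[OF D] .
  have p1: "((\<lambda>x. (x, s)) has_derivative (\<lambda>h. (h, 0))) (at t)"
    by (auto intro!: derivative_eq_intros)
  have p2: "((\<lambda>x. (t, x)) has_derivative (\<lambda>h. (0, h))) (at s)"
    by (auto intro!: derivative_eq_intros)
  have c1: "((\<lambda>x. f (x, s)) has_derivative (D \<circ> (\<lambda>h. (h, 0)))) (at t)"
    using diff_chain_at[OF p1, of f D] D by (simp add: o_def)
  have c2: "((\<lambda>x. f (t, x)) has_derivative (D \<circ> (\<lambda>h. (0, h)))) (at s)"
    using diff_chain_at[OF p2, of f D] D by (simp add: o_def)
  have eA: "D \<circ> (\<lambda>h. (h, 0)) = (\<lambda>h. A * h)"
    using has_derivative_unique[OF c1] hA unfolding has_field_derivative_def by blast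
  have eB: "D \<circ> (\<lambda>h. (0, h)) = (\<lambda>h. B * h)"
    using has_derivative_unique[OF c2] hB unfolding has_field_derivative_def by blast
  have c3: "((\<lambda>y. f (\<gamma> y)) has_derivative (D \<circ> (\<lambda>h. (u * h, v * h)))) (at x)"
    using diff_chain_at[OF g, of f D] D gx by (simp add: o_def)
  have "D \<circ> (\<lambda>h. (u * h, v * h)) = (\<lambda>h. (u * A + v * B) * h)"
  proof
    fix h
    have "(u * h, v * h) = (u * h, 0) + (0, v * h)" by simp
    then have "D (u * h, v * h) = D (u * h, 0) + D (0, v * h)" using linear_add[OF lin] by metis
    also have "\<dots> = A * (u * h) + B * (v * h)" using fun_cong[OF eA, of "u * h"] fun_cong[OF eB, of "v * h"] by simp
    finally show "(D \<circ> (\<lambda>h. (u * h, v * h))) h = (u * A + v * B) * h" by (simp add: algebra_simps)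
  qed
  with c3 show ?thesis unfolding has_field_derivative_def by simp
qed

lemma combine:
  fixes A B C E :: "complex \<Rightarrow> complex"
  assumes dA: "(A has_field_derivative da) (at x0)"
    and dB: "(B has_field_derivative db) (at x0)"
    and dC: "(C has_field_derivative dc) (at x0)"
    and dE: "(E has_field_derivative de) (at x0)"
    and nz: "A x0 \<noteq> 0"
  shows "((\<lambda>x. B x + (C x * E x - k1 - k3) / A x) has_field_derivative
           (db + ((dc * E x0 + C x0 * de) * A x0 - (C x0 * E x0 - k1 - k3) * da) / (A x0 * A x0))) (at x0)"
    "((\<lambda>x. C x / A x) has_field_derivative ((dc * A x0 - C x0 * da) / (A x0 * A x0))) (at x0)"
    "((\<lambda>x. E x * A x) has_field_derivative (de * A x0 + E x0 * da)) (at x0)"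
  using nz by (auto intro!: derivative_eq_intros dA dB dC dE simp: field_simps)

lemma gT: "((\<lambda>x::complex. (x, x * S)) has_derivative (\<lambda>h. (1 * h, S * h))) (at T)"
  by (auto intro!: derivative_eq_intros simp: mult.commute)

lemma gS: "((\<lambda>y::complex. (T, T * y)) has_derivative (\<lambda>h. (0 * h, T * h))) (at S)"
  by (auto intro!: derivative_eq_intros)

lemma gamma0_diff: "(\<lambda>z::complex\<times>complex. (fst z, fst z * snd z)) differentiable at z"
proof -
  have f: "(\<lambda>z::complex\<times>complex. fst z) differentiable at z"
    using has_derivative_fst[OF has_derivative_ident] differentiable_def by blast
  have s: "(\<lambda>z::complex\<times>complex. snd z) differentiable at z"
    using has_derivative_snd[OF has_derivative_ident] differentiable_def by blast
  show ?thesis by (intro differentiable_Pair differentiable_mult f s)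
qed

lemma comp_diff:
  fixes f :: "complex \<times> complex \<Rightarrow> complex"
  assumes "f differentiable at (fst z, fst z * snd z)"
  shows "(\<lambda>z. f (fst z, fst z * snd z)) differentiable at z"
proof -
  have "(f \<circ> (\<lambda>z. (fst z, fst z * snd z))) differentiable at z"
    by (rule differentiable_chain_at[OF gamma0_diff]) (simp add: assms)
  thus ?thesis by (simp add: o_def)
qed




theorem mainTheorem6:
  fixes a1 a2 a3 a4 a5 a6 :: complex
    and U :: "(complex \<times> complex) set"
    and q1 p1 q2 p2 :: "complex \<times> complex \<Rightarrow> complex"
  assumes sum: "2 * a1 + a2 + a3 + a4 + a5 + a6 = 1"
    and sol: "ham_sol (H1' a1 a2 a3 a4 a5 a6) (H2' a1 a2 a3 a4 a5 a6) U q1 p1 q2 p2"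
    and dom: "\<forall>t s. (t, s) \<in> U \<longrightarrow> t \<noteq> 0 \<and> t \<noteq> 1 \<and> s \<noteq> 0 \<and> s \<noteq> 1 \<and> t \<noteq> s"
    and q1nz: "\<forall>z\<in>U. q1 z \<noteq> 0"
  shows "ham_sol (H1'' a1 a2 a3 a4 a5 a6) (H2'' a1 a2 a3 a4 a5 a6)
           {(T, S). (T, T * S) \<in> U}
           (\<lambda>(T, S). q1 (T, T * S))
           (\<lambda>(T, S). p1 (T, T * S) + (q2 (T, T * S) * p2 (T, T * S) - a1 - a3) / q1 (T, T * S))
           (\<lambda>(T, S). q2 (T, T * S) / q1 (T, T * S))
           (\<lambda>(T, S). p2 (T, T * S) * q1 (T, T * S))"
proof -
  have oU: "open U" and dU: "\<forall>z\<in>U. q1 differentiable (at z) \<and> p1 differentiable (at z) \<and>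
            q2 differentiable (at z) \<and> p2 differentiable (at z)"
    using sol unfolding ham_sol_def by blast+
  have eqs: "\<forall>t s. (t, s) \<in> U \<longrightarrow>
      (let a = q1 (t, s); b = p1 (t, s); c = q2 (t, s); e = p2 (t, s) in
        ((\<lambda>x. q1 (x, s)) has_field_derivative dp1 (H1' a1 a2 a3 a4 a5 a6) a b c e t s) (at t) \<and>
        ((\<lambda>x. q1 (t, x)) has_field_derivative dp1 (H2' a1 a2 a3 a4 a5 a6) a b c e t s) (at s) \<and>
        ((\<lambda>x. p1 (x, s)) has_field_derivative - dq1 (H1' a1 a2 a3 a4 a5 a6) a b c e t s) (at t) \<and>
        ((\<lambda>x. p1 (t, x)) has_field_derivative - dq1 (H2' a1 a2 a3 a4 a5 a6) a b c e t s) (at s) \<and>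
        ((\<lambda>x. q2 (x, s)) has_field_derivative dp2 (H1' a1 a2 a3 a4 a5 a6) a b c e t s) (at t) \<and>
        ((\<lambda>x. q2 (t, x)) has_field_derivative dp2 (H2' a1 a2 a3 a4 a5 a6) a b c e t s) (at s) \<and>
        ((\<lambda>x. p2 (x, s)) has_field_derivative - dq2 (H1' a1 a2 a3 a4 a5 a6) a b c e t s) (at t) \<and>
        ((\<lambda>x. p2 (t, x)) has_field_derivative - dq2 (H2' a1 a2 a3 a4 a5 a6) a b c e t s) (at s))"
    using sol unfolding ham_sol_def by blast
  have sum': "a6 = 1 - 2*a1 - a2 - a3 - a4 - a5" using sum by (simp add: algebra_simps)
  have openV: "open {(T, S). (T, T * S) \<in> U}"
  proof -
    have "{(T, S). (T, T * S) \<in> U} = (\<lambda>z. (fst z, fst z * snd z)) -` U" by auto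
    moreover have "open ((\<lambda>z::complex\<times>complex. (fst z, fst z * snd z)) -` U)"
      by (rule continuous_open_vimage[OF oU]) (intro continuous_intros)
    ultimately show ?thesis by simp
  qed
  show ?thesis
    unfolding ham_sol_def Let_def
    apply (intro conjI)
    subgoal by (rule openV)
    subgoal
      apply (intro ballI)
      subgoal for z
      proof -
        assume "z \<in> {(T, S). (T, T * S) \<in> U}"
        then have zU: "(fst z, fst z * snd z) \<in> U" by (cases z) auto
        have d1: "(\<lambda>z. q1 (fst z, fst z * snd z)) differentiable at z"
          by (rule comp_diff) (use dU zU in blast)
        have d2: "(\<lambda>z. p1 (fst z, fst z * snd z)) differentiable at z"
          by (rule comp_diff) (use dU zU in blast)
        have d3: "(\<lambda>z. q2 (fst z, fst z * snd z)) differentiable at z"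
          by (rule comp_diff) (use dU zU in blast)
        have d4: "(\<lambda>z. p2 (fst z, fst z * snd z)) differentiable at z"
          by (rule comp_diff) (use dU zU in blast)
        have nz: "q1 (fst z, fst z * snd z) \<noteq> 0" using q1nz zU by blast
        show ?thesis unfolding case_prod_beta'
          by (intro conjI differentiable_add differentiable_divide differentiable_diff
              differentiable_mult differentiable_const d1 d2 d3 d4 nz)
      qed
      done
    subgoal
      apply (intro allI impI)
      subgoal for T S
      proof -
        assume "(T, S) \<in> {(T, S). (T, T * S) \<in> U}"
        then have TU: "(T, T * S) \<in> U" by simp
        have nT: "T \<noteq> 0" "T \<noteq> 1" "T * S \<noteq> 0" "T * S \<noteq> 1" "T \<noteq> T * S" using dom TU by blast+
        have nS: "S \<noteq> 0" "S \<noteq> 1" using nT by auto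
        have nza: "q1 (T, T * S) \<noteq> 0" using q1nz TU by blast
        have dq1: "q1 differentiable at (T, T * S)" using dU TU by blast
        have dp1: "p1 differentiable at (T, T * S)" using dU TU by blast
        have dq2: "q2 differentiable at (T, T * S)" using dU TU by blast
        have dp2: "p2 differentiable at (T, T * S)" using dU TU by blast
        note E = eqs[rule_format, OF TU, unfolded Let_def]
    note h1 = conjunct1[OF E]
    note h2 = conjunct1[OF conjunct2[OF E]]
    note h3 = conjunct1[OF conjunct2[OF conjunct2[OF E]]]
    note h4 = conjunct1[OF conjunct2[OF conjunct2[OF conjunct2[OF E]]]]
    note h5 = conjunct1[OF conjunct2[OF conjunct2[OF conjunct2[OF conjunct2[OF E]]]]]
    note h6 = conjunct1[OF conjunct2[OF conjunct2[OF conjunct2[OF conjunct2[OF conjunct2[OF E]]]]]]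
    note h7 = conjunct1[OF conjunct2[OF conjunct2[OF conjunct2[OF conjunct2[OF conjunct2[OF conjunct2[OF E]]]]]]]
    note h8 = conjunct2[OF conjunct2[OF conjunct2[OF conjunct2[OF conjunct2[OF conjunct2[OF conjunct2[OF E]]]]]]]
        have gxT: "(\<lambda>x::complex. (x, x * S)) T = (T, T * S)" by simp
        have gxS: "(\<lambda>y::complex. (T, T * y)) S = (T, T * S)" by simp
        note cq1T = chain_partial[OF dq1 h1 h2 gT gxT, unfolded dp1_H1' dH2']
        note cq1S = chain_partial[OF dq1 h1 h2 gS gxS, unfolded dp1_H1' dH2']
        note cp1T = chain_partial[OF dp1 h3 h4 gT gxT, unfolded dq1_H1' dH2']
        note cp1S = chain_partial[OF dp1 h3 h4 gS gxS, unfolded dq1_H1' dH2']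
        note cq2T = chain_partial[OF dq2 h5 h6 gT gxT, unfolded dp2_H1' dH2']
        note cq2S = chain_partial[OF dq2 h5 h6 gS gxS, unfolded dp2_H1' dH2']
        note cp2T = chain_partial[OF dp2 h7 h8 gT gxT, unfolded dq2_H1' dH2']
        note cp2S = chain_partial[OF dp2 h7 h8 gS gxS, unfolded dq2_H1' dH2']
        have nTS: "T * S \<noteq> 1" using nT by simp
        show ?thesis
          apply (simp only: prod.case dq1_H1'' dp1_H1'' dq2_H1'' dp2_H1'' dH2'')
          apply (intro conjI)
          subgoal by (subst alg1[symmetric, OF sum' nT(1,2) nS nTS nza]) (rule cq1T)
          subgoal by (subst alg5[symmetric, OF sum' nT(1,2) nS nTS nza]) (rule cq1S)
          subgoal by (subst alg2[symmetric, OF sum' nT(1,2) nS nTS nza]) (rule combine(1)[OF cq1T cp1T cq2T cp2T nza])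
          subgoal by (subst alg6[symmetric, OF sum' nT(1,2) nS nTS nza]) (rule combine(1)[OF cq1S cp1S cq2S cp2S nza])
          subgoal by (subst alg3[symmetric, OF sum' nT(1,2) nS nTS nza]) (rule combine(2)[OF cq1T cp1T cq2T cp2T nza])
          subgoal by (subst alg7[symmetric, OF sum' nT(1,2) nS nTS nza]) (rule combine(2)[OF cq1S cp1S cq2S cp2S nza])
          subgoal by (subst alg4[symmetric, OF sum' nT(1,2) nS nTS nza]) (rule combine(3)[OF cq1T cp1T cq2T cp2T nza])
          subgoal by (subst alg8[symmetric, OF sum' nT(1,2) nS nTS nza]) (rule combine(3)[OF cq1S cp1S cq2S cp2S nza])
          done
      qed
      done
    done
qed


end
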